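(* Let $\mathcal I$ index a finite set of non-exceptional zero-determinant strategies, strategy $i$ being associated with the point $(\bar\alpha_i,\bar\beta_i)$, and let $Z_i=-(\bar\alpha_i+\bar\beta_i)^{-1}$. Assume either Case (+): $\bar\alpha_i>0$ for all $i\in\mathcal I$, and for some $i^*\in\mathcal I$, $Z_{i^*}>Z_j$ for all $j\ne i^*$; or Case (−): $\bar\alpha_i<0$ for all $i\in\mathcal I$, and for some $i^*\in\mathcal I$, $Z_{i^*}<Z_j$ for all $j\ne i^*$. Then $i^*$ is an ESS for the game $\{A_{ij}\}$, and every solution $\pi(t)$ of the replicator dynamics with $\pi_{i^*}(0)>0$ converges to the vertex $v(i^* )$ as $t\to\infty$.
   Context: Iterated Prisoner's Dilemma with normalized payoffs $T=1>R>P>S=0$, $2R>1$; outcomes ordered $cc,cd,dc,dd$ (own play first); payoff vectors $\mathbf S_X=(R,0,1,P)$, $\mathbf S_Y=(R,1,0,P)$, $\mathbf 1=(1,1,1,1)$. A memory-one strategy vector $\mathbf p\in[0,1]^4$ gives the probability $p_k$ of playing $c$ after the $k$-th outcome, outcomes labeled from the player's own perspective. Strategy $i$ is a memory-one vector $\mathbf p^i$ with some initial play, which is a non-exceptional zero-determinant strategy associated with $(\bar\alpha_i,\bar\beta_i)$: $\mathbf p^i-(1,1,0,0)=\gamma_i(\bar\alpha_i\mathbf S_X+\bar\beta_i\mathbf S_Y+\mathbf 1)$ for some $\gamma_i>0$. $A_{ij}$ is the long-run (Cesàro-limit) average payoff of X when X uses strategy $i$ and Y uses strategy $j$. Replicator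 dynamics on the simplex $\Delta\subset\mathbb R^{\mathcal I}$: $\frac{d\pi_i}{dt}=\pi_i(A_{i\pi}-A_{\pi\pi})$, $A_{i\pi}=\sum_j\pi_jA_{ij}$, $A_{\pi\pi}=\sum_i\pi_iA_{i\pi}$; $v(i)$ is the vertex $\pi_i=1$. $i^*$ is an ESS if $A_{ji^*}<A_{i^*i^*}$ for all $j\ne i^*$. *)

theory Defs
  imports "HOL-Analysis.Analysis"
begin

text \<open>Outcomes are indexed 0,1,2,3 = cc, cd, dc, dd (own play first).
  Normalized payoffs T = 1, S = 0; R and P are parameters.\<close>

definition SX :: "real \<Rightarrow> real \<Rightarrow> nat \<Rightarrow> real" where
  "SX R P k = (if k = 0 then R else if k = 1 then 0 else if k = 2 then 1 else P)"

definition SY :: "real \<Rightarrow> real \<Rightarrow> nat \<Rightarrow> real" where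
  "SY R P k = (if k = 0 then R else if k = 1 then 1 else if k = 2 then 0 else P)"

definition e12 :: "nat \<Rightarrow> real" where
  "e12 k = (if k < 2 then 1 else 0)"

text \<open>Relabelling of an outcome from X's perspective to Y's perspective (cd <-> dc).\<close>
definition swap_outcome :: "nat \<Rightarrow> nat" where
  "swap_outcome k = (if k = 1 then 2 else if k = 2 then 1 else k)"

definition outcome_prob :: "real \<Rightarrow> real \<Rightarrow> nat \<Rightarrow> real" where
  "outcome_prob x y l =
     (if l = 0 then x * y else if l = 1 then x * (1 - y)
      else if l = 2 then (1 - x) * y else (1 - x) * (1 - y))"

text \<open>Distribution of the outcome (from X's perspective) in round n, when X uses memory-one
  vector p with initial cooperation probability x0 and Y uses q with initial cooperation
  probability y0.\<close>
fun outcome_dist :: "(nat \<Rightarrow> real) \<Rightarrow> (nat \<Rightarrow> real) \<Rightarrow> real \<Rightarrow> real \<Rightarrow> nat \<Rightarrow> nat \<Rightarrow> real" where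
  "outcome_dist p q x0 y0 0 l = outcome_prob x0 y0 l"
| "outcome_dist p q x0 y0 (Suc n) l =
     (\<Sum>k<4. outcome_dist p q x0 y0 n k * outcome_prob (p k) (q (swap_outcome k)) l)"

definition longrun_payoff ::
  "real \<Rightarrow> real \<Rightarrow> (nat \<Rightarrow> real) \<Rightarrow> (nat \<Rightarrow> real) \<Rightarrow> real \<Rightarrow> real \<Rightarrow> real" where
  "longrun_payoff R P p q x0 y0 =
     lim (\<lambda>N. (\<Sum>n<N. \<Sum>k<4. outcome_dist p q x0 y0 n k * SX R P k) / real N)"

definition game_matrix ::
  "real \<Rightarrow> real \<Rightarrow> ('i \<Rightarrow> nat \<Rightarrow> real) \<Rightarrow> ('i \<Rightarrow> real) \<Rightarrow> 'i \<Rightarrow> 'i \<Rightarrow> real" where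
  "game_matrix R P p x0 i j = longrun_payoff R P (p i) (p j) (x0 i) (x0 j)"

definition zd_strategy :: "real \<Rightarrow> real \<Rightarrow> (nat \<Rightarrow> real) \<Rightarrow> real \<Rightarrow> real \<Rightarrow> bool" where
  "zd_strategy R P p a b \<longleftrightarrow>
     (\<forall>k<4. 0 \<le> p k \<and> p k \<le> 1) \<and>
     (\<exists>g>0. \<forall>k<4. p k - e12 k = g * (a * SX R P k + b * SY R P k + 1))"

text \<open>Exceptional ZD strategy: p_2 = 1 and p_3 = 0 (1-based), i.e. a = b = -1.\<close>
definition non_exceptional :: "(nat \<Rightarrow> real) \<Rightarrow> bool" where
  "non_exceptional p \<longleftrightarrow> \<not> (p 1 = 1 \<and> p 2 = 0)"

definition is_ESS :: "('i \<Rightarrow> 'i \<Rightarrow> real) \<Rightarrow> 'i \<Rightarrow> bool" where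
  "is_ESS A istar \<longleftrightarrow> (\<forall>j. j \<noteq> istar \<longrightarrow> A j istar < A istar istar)"

definition strategy_simplex :: "(real ^ 'i::finite) set" where
  "strategy_simplex = {x. (\<forall>i. 0 \<le> x $ i) \<and> (\<Sum>i\<in>UNIV. x $ i) = 1}"

definition A_ipi :: "('i::finite \<Rightarrow> 'i \<Rightarrow> real) \<Rightarrow> real ^ 'i \<Rightarrow> 'i \<Rightarrow> real" where
  "A_ipi A x i = (\<Sum>j\<in>UNIV. x $ j * A i j)"

definition A_pipi :: "('i::finite \<Rightarrow> 'i \<Rightarrow> real) \<Rightarrow> real ^ 'i \<Rightarrow> real" where
  "A_pipi A x = (\<Sum>i\<in>UNIV. x $ i * A_ipi A x i)"

definition replicator_field :: "('i::finite \<Rightarrow> 'i \<Rightarrow> real) \<Rightarrow> real ^ 'i \<Rightarrow> real ^ 'i" where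
  "replicator_field A x = (\<chi> i. x $ i * (A_ipi A x i - A_pipi A x))"

definition vertex :: "'i::finite \<Rightarrow> real ^ 'i" where
  "vertex i = (\<chi> j. if j = i then 1 else 0)"

end

theory Submission
  imports Defs "HOL-Real_Asymp.Real_Asymp"
begin

lemma sum4: "(\<Sum>k<(4::nat). f k) = f 0 + f 1 + f 2 + (f 3::real)"
  by (simp add: eval_nat_numeral)

lemma dist_prop:
  assumes p: "\<forall>k<4. 0 \<le> p k \<and> p k \<le> 1" and q: "\<forall>k<4. 0 \<le> q k \<and> q k \<le> 1"
    and x: "0 \<le> x0" "x0 \<le> 1" and y: "0 \<le> y0" "y0 \<le> 1"
  shows "(\<forall>l<4. 0 \<le> outcome_dist p q x0 y0 n l) \<and> (\<Sum>l<4. outcome_dist p q x0 y0 n l) = 1"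
proof (induction n)
  case 0
  have "\<forall>l<4. 0 \<le> outcome_prob x0 y0 l"
    using x y by (auto simp: outcome_prob_def)
  moreover have "(\<Sum>l<4. outcome_prob x0 y0 l) = 1"
    by (simp add: sum4 outcome_prob_def algebra_simps)
  ultimately show ?case by simp
next
  case (Suc n)
  have op: "\<And>k l. k < 4 \<Longrightarrow> 0 \<le> outcome_prob (p k) (q (swap_outcome k)) l"
  proof -
    fix k l :: nat assume "k < 4"
    hence "swap_outcome k < 4" by (simp add: swap_outcome_def)
    hence "0 \<le> p k" "p k \<le> 1" "0 \<le> q (swap_outcome k)" "q (swap_outcome k) \<le> 1"
      using p q \<open>k<4\<close> by auto
    thus "0 \<le> outcome_prob (p k) (q (swap_outcome k)) l"
      by (auto simp: outcome_prob_def)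
  qed
  have "\<forall>l<4. 0 \<le> outcome_dist p q x0 y0 (Suc n) l"
    using Suc op by (auto intro!: sum_nonneg mult_nonneg_nonneg)
  moreover have "(\<Sum>l<4. outcome_dist p q x0 y0 (Suc n) l)
     = (\<Sum>k<4. outcome_dist p q x0 y0 n k * (\<Sum>l<4. outcome_prob (p k) (q (swap_outcome k)) l))"
    unfolding outcome_dist.simps sum4 by (simp add: algebra_simps)
  moreover have "\<And>k. (\<Sum>l<4. outcome_prob (p k) (q (swap_outcome k)) l) = 1"
    by (simp add: sum4 outcome_prob_def algebra_simps)
  ultimately show ?case using Suc by simp
qed

lemma coopX:
  "(\<Sum>l<4. outcome_dist p q x0 y0 (Suc n) l * e12 l) = (\<Sum>k<4. outcome_dist p q x0 y0 n k * p k)"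
  unfolding outcome_dist.simps sum4 by (simp add: outcome_prob_def e12_def algebra_simps)

lemma coopY:
  "(\<Sum>l<4. outcome_dist p q x0 y0 (Suc n) l * e12 (swap_outcome l)) = (\<Sum>k<4. outcome_dist p q x0 y0 n k * q (swap_outcome k))"
  unfolding outcome_dist.simps sum4 by (simp add: outcome_prob_def e12_def swap_outcome_def algebra_simps)


lemma payoff:
  assumes zp: "zd_strategy R P p a b" and zq: "zd_strategy R P q a' b'"
    and x: "0 \<le> x0" "x0 \<le> 1" and y: "0 \<le> y0" "y0 \<le> 1"
    and D: "a * a' - b * b' \<noteq> 0"
  shows "longrun_payoff R P p q x0 y0 = (b - a') / (a * a' - b * b')"
proof -
  obtain g where g: "g > 0" "\<forall>k<4. p k - e12 k = g * (a * SX R P k + b * SY R P k + 1)"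
    and p01: "\<forall>k<4. 0 \<le> p k \<and> p k \<le> 1"
    using zp unfolding zd_strategy_def by blast
  obtain g' where g': "g' > 0" "\<forall>k<4. q k - e12 k = g' * (a' * SX R P k + b' * SY R P k + 1)"
    and q01: "\<forall>k<4. 0 \<le> q k \<and> q k \<le> 1"
    using zq unfolding zd_strategy_def by blast
  define d where "d = outcome_dist p q x0 y0"
  define X where "X n = (\<Sum>k<4. d n k * SX R P k)" for n
  define Y where "Y n = (\<Sum>k<4. d n k * SY R P k)" for n
  define cx where "cx n = (\<Sum>k<4. d n k * e12 k)" for n
  define cy where "cy n = (\<Sum>k<4. d n k * e12 (swap_outcome k))" for n
  have dp: "(\<forall>l<4. 0 \<le> d n l) \<and> (\<Sum>l<4. d n l) = 1" for n
    unfolding d_def using dist_prop[OF p01 q01 x y] by blast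
  have stepx: "cx (Suc n) - cx n = g * (a * X n + b * Y n + 1)" for n
  proof -
    have "cx (Suc n) = (\<Sum>k<4. d n k * p k)" unfolding cx_def d_def by (rule coopX)
    moreover have "p k = e12 k + g * (a * SX R P k + b * SY R P k + 1)" if "k < 4" for k
      using g(2) that by (simp add: algebra_simps)
    ultimately have "cx (Suc n) = (\<Sum>k<4. d n k * (e12 k + g * (a * SX R P k + b * SY R P k + 1)))"
      by simp
    also have "\<dots> = cx n + g * (a * X n + b * Y n + (\<Sum>k<4. d n k))"
      unfolding cx_def X_def Y_def sum4 by (simp add: algebra_simps)
    finally show ?thesis using dp[of n] by simp
  qed
  have stepy: "cy (Suc n) - cy n = g' * (a' * Y n + b' * X n + 1)" for n
  proof -
    have "cy (Suc n) = (\<Sum>k<4. d n k * q (swap_outcome k))" unfolding cy_def d_def by (rule coopY)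
    moreover have "q k = e12 k + g' * (a' * SX R P k + b' * SY R P k + 1)" if "k < 4" for k
      using g'(2) that by (simp add: algebra_simps)
    ultimately have "cy (Suc n) = (\<Sum>k<4. d n k * (e12 (swap_outcome k) + g' * (a' * SX R P (swap_outcome k) + b' * SY R P (swap_outcome k) + 1)))"
      by (simp add: sum4 swap_outcome_def)
    also have "\<dots> = cy n + g' * (a' * Y n + b' * X n + (\<Sum>k<4. d n k))"
      unfolding cy_def X_def Y_def sum4 by (simp add: swap_outcome_def SX_def SY_def algebra_simps)
    finally show ?thesis using dp[of n] by simp
  qed
  have dpe: "0 \<le> d n 0 \<and> 0 \<le> d n 1 \<and> 0 \<le> d n 2 \<and> 0 \<le> d n 3 \<and> d n 0 + d n 1 + d n 2 + d n 3 = 1" for n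
    using dp[of n] by (simp add: sum4)
  have cxb: "0 \<le> cx n \<and> cx n \<le> 1" for n
    using dpe[of n] unfolding cx_def sum4 by (simp add: e12_def)
  have cyb: "0 \<le> cy n \<and> cy n \<le> 1" for n
    using dpe[of n] unfolding cy_def sum4 by (simp add: e12_def swap_outcome_def)
  define Ex where "Ex N = (cx N - cx 0) / real N" for N
  define Ey where "Ey N = (cy N - cy 0) / real N" for N
  have Ex0: "Ex \<longlonglongrightarrow> 0"
  proof (rule Lim_null_comparison)
    show "\<forall>\<^sub>F N in sequentially. norm (Ex N) \<le> 1 / real N"
    proof (intro always_eventually allI)
      fix N :: nat
      have "\<bar>cx N - cx 0\<bar> \<le> 1" using cxb[of N] cxb[of 0] by auto
      thus "norm (Ex N) \<le> 1 / real N"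
        by (simp add: Ex_def abs_divide divide_right_mono)
    qed
    show "(\<lambda>N. 1 / real N) \<longlonglongrightarrow> 0" by (rule lim_inverse_n')
  qed
  have Ey0: "Ey \<longlonglongrightarrow> 0"
  proof (rule Lim_null_comparison)
    show "\<forall>\<^sub>F N in sequentially. norm (Ey N) \<le> 1 / real N"
    proof (intro always_eventually allI)
      fix N :: nat
      have "\<bar>cy N - cy 0\<bar> \<le> 1" using cyb[of N] cyb[of 0] by auto
      thus "norm (Ey N) \<le> 1 / real N"
        by (simp add: Ey_def abs_divide divide_right_mono)
    qed
    show "(\<lambda>N. 1 / real N) \<longlonglongrightarrow> 0" by (rule lim_inverse_n')
  qed
  define aX where "aX N = (\<Sum>n<N. X n) / real N" for N
  define aY where "aY N = (\<Sum>n<N. Y n) / real N" for N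
  have ex: "a * aX N + b * aY N + 1 = Ex N / g" if "N > 0" for N
  proof -
    have "cx N - cx 0 = (\<Sum>n<N. g * (a * X n + b * Y n + 1))"
      using sum_lessThan_telescope[of cx N] stepx by simp
    also have "\<dots> = g * (a * (\<Sum>n<N. X n) + b * (\<Sum>n<N. Y n) + real N)"
      by (simp add: sum_distrib_left sum.distrib algebra_simps)
    finally show ?thesis using that g(1)
      by (simp add: Ex_def aX_def aY_def field_simps)
  qed
  have ey: "b' * aX N + a' * aY N + 1 = Ey N / g'" if "N > 0" for N
  proof -
    have "cy N - cy 0 = (\<Sum>n<N. g' * (a' * Y n + b' * X n + 1))"
      using sum_lessThan_telescope[of cy N] stepy by simp
    also have "\<dots> = g' * (a' * (\<Sum>n<N. Y n) + b' * (\<Sum>n<N. X n) + real N)"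
      by (simp add: sum_distrib_left sum.distrib algebra_simps)
    finally show ?thesis using that g'(1)
      by (simp add: Ey_def aX_def aY_def field_simps)
  qed
  have sol: "aX N = ((Ex N / g - 1) * a' - b * (Ey N / g' - 1)) / (a * a' - b * b')" if "N > 0" for N
  proof -
    have e1: "a * aX N + b * aY N = Ex N / g - 1" and e2: "b' * aX N + a' * aY N = Ey N / g' - 1"
      using ex[OF that] ey[OF that] by linarith+
    have "(a * a' - b * b') * aX N = (Ex N / g - 1) * a' - b * (Ey N / g' - 1)"
      by (simp add: e1[symmetric] e2[symmetric] algebra_simps)
    thus ?thesis using D by (simp add: field_simps)
  qed
  have lim1: "(\<lambda>N. ((Ex N / g - 1) * a' - b * (Ey N / g' - 1)) / (a * a' - b * b'))
      \<longlonglongrightarrow> ((0 / g - 1) * a' - b * (0 / g' - 1)) / (a * a' - b * b')"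
    by (intro tendsto_intros Ex0 Ey0) (use g(1) g'(1) D in auto)
  have "aX \<longlonglongrightarrow> ((0 / g - 1) * a' - b * (0 / g' - 1)) / (a * a' - b * b')"
  proof (rule Lim_transform_eventually[OF lim1])
    show "\<forall>\<^sub>F N in sequentially. ((Ex N / g - 1) * a' - b * (Ey N / g' - 1)) / (a * a' - b * b') = aX N"
      using eventually_gt_at_top[of 0] by eventually_elim (simp add: sol)
  qed
  hence "aX \<longlonglongrightarrow> (b - a') / (a * a' - b * b')" by (simp add: algebra_simps)
  moreover have "longrun_payoff R P p q x0 y0 = lim aX"
    unfolding longrun_payoff_def aX_def X_def d_def ..
  ultimately show ?thesis by (simp add: limI)
qed

lemma zd_bounds:
  assumes z: "zd_strategy R P p a b" and ne: "non_exceptional p" and R: "0 < R"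
  shows "b \<le> -1 \<and> -1 \<le> a \<and> (a + b) * R + 1 \<le> 0 \<and> \<not> (a = -1 \<and> b = -1)"
proof -
  obtain g where g: "g > 0" "\<forall>k<4. p k - e12 k = g * (a * SX R P k + b * SY R P k + 1)"
    and p01: "\<forall>k<4. 0 \<le> p k \<and> p k \<le> 1"
    using z unfolding zd_strategy_def by blast
  have e0: "p 0 - 1 = g * ((a + b) * R + 1)" using g(2)[rule_format, of 0] by (simp add: e12_def SX_def SY_def algebra_simps)
  have e1: "p 1 - 1 = g * (b + 1)" using g(2)[rule_format, of 1] by (simp add: e12_def SX_def SY_def)
  have e2: "p 2 = g * (a + 1)" using g(2)[rule_format, of 2] by (simp add: e12_def SX_def SY_def)
  have "p 0 \<le> 1" "p 1 \<le> 1" "0 \<le> p 2" using p01 by auto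
  hence "g * ((a + b) * R + 1) \<le> 0" "g * (b + 1) \<le> 0" "0 \<le> g * (a + 1)" using e0 e1 e2 by linarith+
  hence "(a + b) * R + 1 \<le> 0" "b + 1 \<le> 0" "0 \<le> a + 1" using g(1)
    by (simp_all add: mult_le_0_iff zero_le_mult_iff)
  moreover have "\<not> (a = -1 \<and> b = -1)"
  proof
    assume "a = -1 \<and> b = -1"
    hence "p 1 = 1" "p 2 = 0" using e1 e2 by auto
    thus False using ne unfolding non_exceptional_def by simp
  qed
  ultimately show ?thesis by auto
qed

lemma pair_alg:
  fixes a b a' b' R \<sigma> :: real
  assumes R: "0 < R"
    and h1: "b \<le> -1" "-1 \<le> a" "(a + b) * R + 1 \<le> 0" "\<not> (a = -1 \<and> b = -1)"
    and h2: "b' \<le> -1" "-1 \<le> a'" "(a' + b') * R + 1 \<le> 0" "\<not> (a' = -1 \<and> b' = -1)"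
    and s: "(\<sigma> = 1 \<and> a > 0 \<and> a' > 0) \<or> (\<sigma> = -1 \<and> a < 0 \<and> a' < 0)"
  shows "a * a' - b * b' < 0 \<and>
    (\<exists>c>0. (b - a') / (a * a' - b * b') + 1 / (a' + b') = c * (\<sigma> * (a + b) - \<sigma> * (a' + b')))"
proof -
  have sn: "a + b < 0" "a' + b' < 0"
  proof -
    have "(a + b) * R < 0" "(a' + b') * R < 0" using h1(3) h2(3) by linarith+
    thus "a + b < 0" "a' + b' < 0" using R by (simp_all add: mult_less_0_iff)
  qed
  have D: "a * a' - b * b' < 0"
    using s
  proof
    assume "\<sigma> = 1 \<and> a > 0 \<and> a' > 0"
    hence "a < - b" "a' < - b'" "0 < a" "0 < a'" using sn by auto
    hence "a * a' < (- b) * (- b')" by (intro mult_strict_mono) auto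
    thus ?thesis by simp
  next
    assume as: "\<sigma> = -1 \<and> a < 0 \<and> a' < 0"
    have "(-a) * (-a') \<le> 1 * 1" using as h1 h2 by (intro mult_mono) auto
    moreover have "1 * 1 \<le> (-b) * (-b')" using h1 h2 by (intro mult_mono) auto
    moreover have "(-a) * (-a') < 1 \<or> 1 < (-b) * (-b')"
    proof (rule ccontr)
      assume "\<not> ?thesis"
      hence e: "(-a) * (-a') = 1" "(-b) * (-b') = 1" using calculation by auto
      have "-a \<le> 1" "-a' \<le> 1" "0 < -a" "0 < -a'" using as h1 h2 by auto
      hence "-a = 1"
        by (metis e(1) mult_le_cancel_left1 mult.commute order_antisym mult_right_le_one_le less_le)
      have "-b = 1" using e(2) h1 h2
        by (smt (verit, best) mult_le_cancel_left1)
      show False using \<open>-a = 1\<close> \<open>-b = 1\<close> h1(4) by auto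
    qed
    ultimately show ?thesis by auto
  qed
  have s2: "\<sigma> * \<sigma> = 1" "\<sigma> * a' > 0" using s by auto
  define c where "c = \<sigma> * a' / ((a * a' - b * b') * (a' + b'))"
  have cpos: "c > 0" unfolding c_def using D sn s2 by (simp add: zero_less_mult_iff divide_pos_pos)
  have "(b - a') / (a * a' - b * b') + 1 / (a' + b') = a' * ((a + b) - (a' + b')) / ((a * a' - b * b') * (a' + b'))"
    using D sn by (simp add: field_simps)
  also have "\<dots> = c * (\<sigma> * (a + b) - \<sigma> * (a' + b'))"
  proof -
    have Q: "(a * a' - b * b') * (a' + b') \<noteq> 0" using D sn by simp
    show ?thesis using s Q unfolding c_def by (auto simp: divide_simps)
  qed
  finally show ?thesis using D cpos by blast
qed

lemma expo:
  fixes h g :: "real \<Rightarrow> real"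
  assumes cg: "continuous_on {0..} g"
    and dh: "\<And>t. t \<ge> 0 \<Longrightarrow> (h has_real_derivative h t * g t) (at t within {0..})"
    and t: "t \<ge> 0"
  shows "h t = h 0 * exp (integral {0..t} g)"
proof -
  define G where "G u = integral {0..u} g" for u
  have cg': "continuous_on {0..t} g" using cg by (rule continuous_on_subset) auto
  have dG: "(G has_real_derivative g u) (at u within {0..t})" if "u \<in> {0..t}" for u
    unfolding G_def by (rule integral_has_real_derivative[OF cg' that])
  have dh': "(h has_real_derivative h u * g u) (at u within {0..t})" if "u \<in> {0..t}" for u
    using dh[of u] that by (auto intro: DERIV_subset)
  have d0: "((\<lambda>u. h u * exp (- G u)) has_real_derivative 0) (at u within {0..t})" if "u \<in> {0..t}" for u
  proof -
    have ex: "DERIV (\<lambda>x. exp (- x)) (G u) :> exp (- G u) * (- 1)"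
      by (rule DERIV_fun_exp) (rule DERIV_minus[OF DERIV_ident])
    have e: "((\<lambda>u. exp (- G u)) has_real_derivative (exp (- G u) * (- 1)) * g u) (at u within {0..t})"
      by (rule DERIV_chain'[OF dG[OF that] ex])
    show ?thesis
      by (rule DERIV_cong[OF DERIV_mult[OF dh'[OF that] e]]) (simp add: algebra_simps)
  qed
  have cv: "convex {0..t}" by simp
  obtain c where "\<forall>u\<in>{0..t}. h u * exp (- G u) = c"
    using has_field_derivative_zero_constant[OF cv d0] by blast
  hence "h t * exp (- G t) = h 0 * exp (- G 0)" using t by auto
  moreover have "G 0 = 0" unfolding G_def by simp
  ultimately have "h t * exp (- G t) = h 0" by simp
  hence "h t = h 0 * exp (G t)" by (simp add: exp_minus field_simps)
  thus ?thesis unfolding G_def .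
qed

lemma dynamics:
  fixes A :: "'i::finite \<Rightarrow> 'i \<Rightarrow> real" and \<rho> :: "'i \<Rightarrow> real" and istar :: 'i
    and \<pi> :: "real \<Rightarrow> real ^ 'i"
  assumes rho: "\<forall>j. j \<noteq> istar \<longrightarrow> \<rho> j < \<rho> istar"
    and dom: "\<forall>j k. j \<noteq> istar \<longrightarrow> \<rho> j \<le> \<rho> k \<longrightarrow> A j k < A istar k"
    and init: "\<pi> 0 \<in> strategy_simplex" "\<pi> 0 $ istar > 0"
    and dvec: "\<forall>t\<ge>0. (\<pi> has_vector_derivative replicator_field A (\<pi> t)) (at t within {0..})"
  shows "(\<pi> \<longlongrightarrow> vertex istar) at_top"
proof -
  define gi where "gi i t = A_ipi A (\<pi> t) i - A_pipi A (\<pi> t)" for i t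
  have dcomp: "((\<lambda>t. \<pi> t $ i) has_real_derivative (\<pi> t $ i * gi i t)) (at t within {0..})"
    if "t \<ge> 0" for i t
  proof -
    have "((\<lambda>t. \<pi> t $ i) has_vector_derivative (replicator_field A (\<pi> t) $ i)) (at t within {0..})"
      using bounded_linear.has_vector_derivative[OF bounded_linear_vec_nth dvec[rule_format, OF that]] .
    thus ?thesis
      by (simp add: has_real_derivative_iff_has_vector_derivative replicator_field_def gi_def)
  qed
  have ccomp: "continuous_on {0..} (\<lambda>t. \<pi> t $ i)" for i
    by (rule DERIV_continuous_on[OF dcomp]) auto
  have cg: "continuous_on {0..} (gi i)" for i
    unfolding gi_def A_ipi_def A_pipi_def by (intro continuous_intros ccomp)
  have rep: "\<pi> t $ i = \<pi> 0 $ i * exp (integral {0..t} (gi i))" if "t \<ge> 0" for i t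
    by (rule expo[OF cg dcomp that]) auto
  have init0: "0 \<le> \<pi> 0 $ i" for i using init(1) by (simp add: strategy_simplex_def)
  have nonneg: "0 \<le> \<pi> t $ i" if "t \<ge> 0" for i t
    using rep[OF that, of i] init0[of i] by simp
  have pos: "0 < \<pi> t $ istar" if "t \<ge> 0" for t
    using rep[OF that, of istar] init(2) by simp
  have sum1: "(\<Sum>i\<in>UNIV. \<pi> t $ i) = 1" if "t \<ge> 0" for t
  proof -
    define hS where "hS t = (\<Sum>i\<in>UNIV. \<pi> t $ i) - 1" for t
    have chS: "continuous_on {0..} (\<lambda>t. - A_pipi A (\<pi> t))"
      unfolding A_ipi_def A_pipi_def by (intro continuous_intros ccomp)
    have dS: "(hS has_real_derivative hS u * (- A_pipi A (\<pi> u))) (at u within {0..})" if "u \<ge> 0" for u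
    proof -
      have "(hS has_real_derivative (\<Sum>i\<in>UNIV. \<pi> u $ i * gi i u) - 0) (at u within {0..})"
        unfolding hS_def by (intro DERIV_diff DERIV_sum dcomp that DERIV_const)
      moreover have "(\<Sum>i\<in>UNIV. \<pi> u $ i * gi i u) = hS u * (- A_pipi A (\<pi> u))"
      proof -
        have "(\<Sum>i\<in>UNIV. \<pi> u $ i * gi i u) = (\<Sum>i\<in>UNIV. \<pi> u $ i * A_ipi A (\<pi> u) i) - (\<Sum>i\<in>UNIV. \<pi> u $ i) * A_pipi A (\<pi> u)"
          unfolding gi_def by (simp add: right_diff_distrib sum_subtractf sum_distrib_right)
        also have "\<dots> = A_pipi A (\<pi> u) - (\<Sum>i\<in>UNIV. \<pi> u $ i) * A_pipi A (\<pi> u)"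
          by (simp add: A_pipi_def)
        finally show ?thesis unfolding hS_def by (simp add: algebra_simps)
      qed
      ultimately show ?thesis by simp
    qed
    have "hS t = hS 0 * exp (integral {0..t} (\<lambda>t. - A_pipi A (\<pi> t)))"
      by (rule expo[OF chS dS that]) auto
    moreover have "hS 0 = 0" using init(1) by (simp add: hS_def strategy_simplex_def)
    ultimately show ?thesis by (simp add: hS_def)
  qed
  have le1: "\<pi> t $ i \<le> 1" if "t \<ge> 0" for i t
  proof -
    have "\<pi> t $ i \<le> (\<Sum>i\<in>UNIV. \<pi> t $ i)"
      by (rule member_le_sum) (auto intro: nonneg[OF that])
    thus ?thesis using sum1[OF that] by simp
  qed
  have ipi_diff: "A_ipi A (\<pi> t) j - A_ipi A (\<pi> t) istar = (\<Sum>k\<in>UNIV. \<pi> t $ k * (A j k - A istar k))" for t j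
    unfolding A_ipi_def by (simp add: sum_subtractf algebra_simps)
  have conv_n: "\<forall>j. card {k. \<rho> k < \<rho> j} = n \<longrightarrow> j \<noteq> istar \<longrightarrow> ((\<lambda>t. \<pi> t $ j) \<longlongrightarrow> 0) at_top" for n
  proof (induction n rule: less_induct)
    case (less n)
    show ?case
    proof (intro allI impI)
      fix j assume cj: "card {k. \<rho> k < \<rho> j} = n" and js: "j \<noteq> istar"
      define Lo where "Lo = {k. \<rho> k < \<rho> j}"
      have IH: "((\<lambda>t. \<pi> t $ k) \<longlongrightarrow> 0) at_top" if "k \<in> Lo" for k
      proof -
        have "{k'. \<rho> k' < \<rho> k} \<subset> Lo" using that unfolding Lo_def by auto
        hence "card {k'. \<rho> k' < \<rho> k} < n" using cj psubset_card_mono[of Lo] unfolding Lo_def by auto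
        moreover have "k \<noteq> istar" using that rho js unfolding Lo_def by auto
        ultimately show ?thesis using less.IH by blast
      qed
      define eps where "eps t = (\<Sum>k\<in>Lo. \<pi> t $ k)" for t
      have "(eps \<longlongrightarrow> (\<Sum>k\<in>Lo. 0)) at_top"
        unfolding eps_def by (intro tendsto_sum IH)
      hence eps0: "(eps \<longlongrightarrow> 0) at_top" by simp
      define Hi where "Hi = UNIV - Lo"
      have jHi: "j \<in> Hi" unfolding Hi_def Lo_def by simp
      define \<delta> where "\<delta> = Min ((\<lambda>k. A istar k - A j k) ` Hi)"
      have dle: "\<delta> \<le> A istar k - A j k" if "k \<in> Hi" for k
        unfolding \<delta>_def using that by (intro Min_le) auto
      have dpos: "\<delta> > 0"
      proof -
        have "finite ((\<lambda>k. A istar k - A j k) ` Hi)" "(\<lambda>k. A istar k - A j k) ` Hi \<noteq> {}"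
          using jHi by auto
        moreover have "\<forall>x\<in>(\<lambda>k. A istar k - A j k) ` Hi. 0 < x"
          using dom js by (auto simp: Hi_def Lo_def not_less)
        ultimately show ?thesis unfolding \<delta>_def using Min_gr_iff by blast
      qed
      define M where "M = (\<Sum>k\<in>UNIV. \<bar>A j k - A istar k\<bar>)"
      have Mle: "A j k - A istar k \<le> M" for k
      proof -
        have "\<bar>A j k - A istar k\<bar> \<le> M" unfolding M_def by (rule member_le_sum) auto
        thus ?thesis by simp
      qed
      have M0: "M \<ge> 0" unfolding M_def by (auto intro: sum_nonneg)
      have hb: "A_ipi A (\<pi> t) j - A_ipi A (\<pi> t) istar \<le> - \<delta> + (\<delta> + M) * eps t" if "t \<ge> 0" for t
      proof -
        have U: "UNIV = Hi \<union> Lo" "Hi \<inter> Lo = {}" unfolding Hi_def by auto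
        have "A_ipi A (\<pi> t) j - A_ipi A (\<pi> t) istar
            = (\<Sum>k\<in>Hi. \<pi> t $ k * (A j k - A istar k)) + (\<Sum>k\<in>Lo. \<pi> t $ k * (A j k - A istar k))"
          unfolding ipi_diff U(1) by (rule sum.union_disjoint) (use U(2) in auto)
        also have "\<dots> \<le> (\<Sum>k\<in>Hi. \<pi> t $ k * (- \<delta>)) + (\<Sum>k\<in>Lo. \<pi> t $ k * M)"
        proof (intro add_mono sum_mono)
          fix k assume "k \<in> Hi"
          thus "\<pi> t $ k * (A j k - A istar k) \<le> \<pi> t $ k * (- \<delta>)"
            using dle[of k] nonneg[OF that, of k] by (intro mult_left_mono) auto
        next
          fix k assume "k \<in> Lo"
          thus "\<pi> t $ k * (A j k - A istar k) \<le> \<pi> t $ k * M"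
            using Mle[of k] nonneg[OF that, of k] by (intro mult_left_mono) auto
        qed
        also have "\<dots> = - \<delta> * (\<Sum>k\<in>Hi. \<pi> t $ k) + M * eps t"
          unfolding eps_def by (simp add: sum_distrib_right sum_distrib_left algebra_simps)
        also have "(\<Sum>k\<in>Hi. \<pi> t $ k) = 1 - eps t"
        proof -
          have "(\<Sum>k\<in>Hi. \<pi> t $ k) + eps t = 1"
            unfolding eps_def using sum1[OF that] sum.union_disjoint[of Hi Lo "\<lambda>k. \<pi> t $ k"] U by simp
          thus ?thesis by simp
        qed
        finally show ?thesis by (simp add: algebra_simps)
      qed
      have "\<forall>\<^sub>F t in at_top. eps t < \<delta> / (2 * (\<delta> + M))"
        using eps0 dpos M0 by (intro order_tendstoD(2)) auto
      then obtain T where T: "\<And>t. t \<ge> T \<Longrightarrow> eps t < \<delta> / (2 * (\<delta> + M))"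
        unfolding eventually_at_top_linorder by blast
      define T1 where "T1 = max T 1"
      have hneg: "A_ipi A (\<pi> t) j - A_ipi A (\<pi> t) istar \<le> - \<delta> / 2" if "t \<ge> T1" for t
      proof -
        have t0: "t \<ge> 0" "t \<ge> T" using that unfolding T1_def by auto
        have "(\<delta> + M) * eps t \<le> (\<delta> + M) * (\<delta> / (2 * (\<delta> + M)))"
          using T[OF t0(2)] dpos M0 by (intro mult_left_mono) auto
        also have "\<dots> = \<delta> / 2" using dpos M0 by (simp add: field_simps)
        finally show ?thesis using hb[OF t0(1)] by simp
      qed
      show "((\<lambda>t. \<pi> t $ j) \<longlongrightarrow> 0) at_top"
      proof (cases "\<pi> 0 $ j = 0")
        case True
        have "\<forall>\<^sub>F t in at_top. \<pi> t $ j = 0"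
          using eventually_ge_at_top[of "0::real"] proof eventually_elim
          case (elim t)
          show ?case using rep[OF elim, of j] True by simp
        qed
        thus ?thesis by (rule tendsto_eventually)
      next
        case False
        hence pj0: "\<pi> 0 $ j > 0" using init0[of j] by simp
        have pj: "\<pi> t $ j > 0" if "t \<ge> 0" for t using rep[OF that, of j] pj0 by simp
        define L where "L t = ln (\<pi> t $ j) - ln (\<pi> t $ istar)" for t
        have dL: "(L has_real_derivative (A_ipi A (\<pi> t) j - A_ipi A (\<pi> t) istar)) (at t)" if "t > 0" for t
        proof -
          have at: "at t within {0..} = at t" using that by (intro at_within_interior) simp
          have d1: "((\<lambda>t. \<pi> t $ j) has_real_derivative (\<pi> t $ j * gi j t)) (at t)"
            using dcomp[of t j] that at by simp
          have d2: "((\<lambda>t. \<pi> t $ istar) has_real_derivative (\<pi> t $ istar * gi istar t)) (at t)"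
            using dcomp[of t istar] that at by simp
          have "(L has_real_derivative (inverse (\<pi> t $ j) * (\<pi> t $ j * gi j t) -
                 inverse (\<pi> t $ istar) * (\<pi> t $ istar * gi istar t))) (at t)"
            unfolding L_def
            by (intro DERIV_diff DERIV_chain'[OF d1 DERIV_ln] DERIV_chain'[OF d2 DERIV_ln] pj pos) (use that in auto)
          moreover have "inverse (\<pi> t $ j) * (\<pi> t $ j * gi j t) -
                 inverse (\<pi> t $ istar) * (\<pi> t $ istar * gi istar t)
              = A_ipi A (\<pi> t) j - A_ipi A (\<pi> t) istar"
            using pj[of t] pos[of t] that by (simp add: gi_def mult.assoc[symmetric])
          ultimately show ?thesis by simp
        qed
        define \<Phi> where "\<Phi> t = L t + \<delta> / 2 * t" for t
        have Phi: "\<Phi> t \<le> \<Phi> T1" if "t \<ge> T1" for t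
        proof (rule DERIV_nonpos_imp_nonincreasing[OF that])
          fix x assume x: "T1 \<le> x" "x \<le> t"
          have "x > 0" using x unfolding T1_def by auto
          have "(\<Phi> has_real_derivative (A_ipi A (\<pi> x) j - A_ipi A (\<pi> x) istar) + \<delta> / 2 * 1) (at x)"
            unfolding \<Phi>_def by (intro DERIV_add dL \<open>x > 0\<close> DERIV_cmult DERIV_ident)
          moreover have "(A_ipi A (\<pi> x) j - A_ipi A (\<pi> x) istar) + \<delta> / 2 * 1 \<le> 0"
            using hneg[OF x(1)] by simp
          ultimately show "\<exists>y. (\<Phi> has_real_derivative y) (at x) \<and> y \<le> 0" by blast
        qed
        have bound: "\<pi> t $ j \<le> exp (\<Phi> T1 - \<delta> / 2 * t)" if "t \<ge> T1" for t
        proof -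
          have t0: "t \<ge> 0" using that unfolding T1_def by auto
          have "\<pi> t $ j = exp (L t) * \<pi> t $ istar"
            using pj[OF t0] pos[OF t0] by (simp add: L_def exp_diff)
          also have "\<dots> \<le> exp (L t)"
            using le1[OF t0, of istar] by (simp add: mult_left_le)
          also have "\<dots> \<le> exp (\<Phi> T1 - \<delta> / 2 * t)"
            using Phi[OF that] by (simp add: \<Phi>_def)
          finally show ?thesis .
        qed
        have lim: "((\<lambda>t. exp (\<Phi> T1 - \<delta> / 2 * t)) \<longlongrightarrow> 0) at_top"
          using dpos by real_asymp
        show ?thesis
        proof (rule tendsto_sandwich[OF _ _ tendsto_const lim])
          show "\<forall>\<^sub>F t in at_top. 0 \<le> \<pi> t $ j"
            using eventually_ge_at_top[of "0::real"] by eventually_elim (rule nonneg)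
          show "\<forall>\<^sub>F t in at_top. \<pi> t $ j \<le> exp (\<Phi> T1 - \<delta> / 2 * t)"
            using eventually_ge_at_top[of T1] by eventually_elim (rule bound)
        qed
      qed
    qed
  qed
  have conv: "((\<lambda>t. \<pi> t $ j) \<longlongrightarrow> 0) at_top" if "j \<noteq> istar" for j
    using conv_n that by blast
  show ?thesis
  proof (rule vec_tendstoI)
    fix i
    show "((\<lambda>t. \<pi> t $ i) \<longlongrightarrow> vertex istar $ i) at_top"
    proof (cases "i = istar")
      case False
      thus ?thesis using conv[OF False] by (simp add: vertex_def)
    next
      case True
      have "((\<lambda>t. 1 - (\<Sum>k\<in>UNIV - {istar}. \<pi> t $ k)) \<longlongrightarrow> 1 - (\<Sum>k\<in>UNIV - {istar}. 0)) at_top"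
        by (intro tendsto_intros conv) auto
      moreover have "\<forall>\<^sub>F t in at_top. 1 - (\<Sum>k\<in>UNIV - {istar}. \<pi> t $ k) = \<pi> t $ istar"
        using eventually_ge_at_top[of "0::real"]
      proof eventually_elim
        case (elim t)
        have "(\<Sum>k\<in>UNIV. \<pi> t $ k) = \<pi> t $ istar + (\<Sum>k\<in>UNIV - {istar}. \<pi> t $ k)"
          by (rule sum.remove) auto
        thus ?case using sum1[OF elim] by simp
      qed
      ultimately have "((\<lambda>t. \<pi> t $ istar) \<longlongrightarrow> 1) at_top"
        by (simp add: tendsto_cong)
      thus ?thesis using True by (simp add: vertex_def)
    qed
  qed
qed

lemma inv_neg_less: "s < 0 \<Longrightarrow> s' < 0 \<Longrightarrow> (- 1 / s' < - 1 / s) = (s' < (s::real))"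
  by (auto simp: divide_simps)

theorem theorem4p11:
  fixes R P :: real
    and p :: "'i::finite \<Rightarrow> nat \<Rightarrow> real"
    and x0 :: "'i \<Rightarrow> real"
    and a b :: "'i \<Rightarrow> real"
    and istar :: 'i
  assumes "0 < P" and "P < R" and "R < 1" and "2 * R > 1"
    and "\<forall>i. zd_strategy R P (p i) (a i) (b i)"
    and "\<forall>i. non_exceptional (p i)"
    and "\<forall>i. 0 \<le> x0 i \<and> x0 i \<le> 1"
    and "((\<forall>i. a i > 0) \<and>
          (\<forall>j. j \<noteq> istar \<longrightarrow> - 1 / (a istar + b istar) > - 1 / (a j + b j)))
       \<or> ((\<forall>i. a i < 0) \<and>
          (\<forall>j. j \<noteq> istar \<longrightarrow> - 1 / (a istar + b istar) < - 1 / (a j + b j)))"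
  shows "is_ESS (game_matrix R P p x0) istar \<and>
    (\<forall>\<pi> :: real \<Rightarrow> real ^ 'i.
       \<pi> 0 \<in> strategy_simplex \<and> \<pi> 0 $ istar > 0 \<and>
       (\<forall>t\<ge>0. (\<pi> has_vector_derivative replicator_field (game_matrix R P p x0) (\<pi> t))
                 (at t within {0..}))
       \<longrightarrow> (\<pi> \<longlongrightarrow> vertex istar) at_top)"
proof -
  define A where "A = game_matrix R P p x0"
  have R0: "0 < R" using assms(1,2) by linarith
  have bnd: "b i \<le> -1 \<and> -1 \<le> a i \<and> (a i + b i) * R + 1 \<le> 0 \<and> \<not> (a i = -1 \<and> b i = -1)" for i
    using zd_bounds assms(5,6) R0 by blast
  have sneg: "a i + b i < 0" for i
  proof -
    have "(a i + b i) * R < 0" using bnd[of i] by linarith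
    thus ?thesis using R0 by (simp add: mult_less_0_iff)
  qed
  obtain \<sigma> :: real where sig: "(\<sigma> = 1 \<and> (\<forall>i. a i > 0)) \<or> (\<sigma> = -1 \<and> (\<forall>i. a i < 0))"
    and hstar: "\<forall>j. j \<noteq> istar \<longrightarrow> \<sigma> * (a j + b j) < \<sigma> * (a istar + b istar)"
  proof (cases "\<forall>i. a i > 0")
    case True
    hence "(\<forall>j. j \<noteq> istar \<longrightarrow> - 1 / (a istar + b istar) > - 1 / (a j + b j))"
      using assms(8) by (metis not_less_iff_gr_or_eq zero_less_one less_trans neg_less_0_iff_less)
    hence "\<forall>j. j \<noteq> istar \<longrightarrow> 1 * (a j + b j) < 1 * (a istar + b istar)"
      using inv_neg_less sneg by auto
    thus ?thesis using that[of 1] True by auto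
  next
    case False
    hence F: "(\<forall>i. a i < 0) \<and> (\<forall>j. j \<noteq> istar \<longrightarrow> - 1 / (a istar + b istar) < - 1 / (a j + b j))"
      using assms(8) by blast
    hence "\<forall>j. j \<noteq> istar \<longrightarrow> (-1) * (a j + b j) < (-1) * (a istar + b istar)"
      using inv_neg_less sneg by auto
    thus ?thesis using that[of "-1"] F by auto
  qed
  define \<rho> where "\<rho> i = \<sigma> * (a i + b i)" for i
  have sig2: "(\<sigma> = 1 \<and> a i > 0 \<and> a k > 0) \<or> (\<sigma> = -1 \<and> a i < 0 \<and> a k < 0)" for i k
    using sig by auto
  have pr: "a i * a k - b i * b k < 0 \<and>
    (\<exists>c>0. (b i - a k) / (a i * a k - b i * b k) + 1 / (a k + b k) = c * (\<rho> i - \<rho> k))" for i k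
    unfolding \<rho>_def using pair_alg[OF R0 _ _ _ _ _ _ _ _ sig2[of i k]] bnd[of i] bnd[of k] by blast
  have Aval: "A i k = (b i - a k) / (a i * a k - b i * b k)" for i k
  proof -
    have "a i * a k - b i * b k \<noteq> 0" using pr[of i k] by simp
    thus ?thesis unfolding A_def game_matrix_def
      using payoff assms(5,7) by blast
  qed
  have key: "\<exists>c>0. A i k + 1 / (a k + b k) = c * (\<rho> i - \<rho> k)" for i k
    using pr[of i k] Aval[of i k] by simp
  have rho: "\<forall>j. j \<noteq> istar \<longrightarrow> \<rho> j < \<rho> istar" using hstar unfolding \<rho>_def by blast
  have dom: "\<forall>j k. j \<noteq> istar \<longrightarrow> \<rho> j \<le> \<rho> k \<longrightarrow> A j k < A istar k"
  proof (intro allI impI)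
    fix j k assume js: "j \<noteq> istar" and jk: "\<rho> j \<le> \<rho> k"
    obtain c1 where c1: "c1 > 0" "A istar k + 1 / (a k + b k) = c1 * (\<rho> istar - \<rho> k)"
      using key by blast
    obtain c2 where c2: "c2 > 0" "A j k + 1 / (a k + b k) = c2 * (\<rho> j - \<rho> k)"
      using key by blast
    have "\<rho> k \<le> \<rho> istar" using rho by (cases "k = istar") (auto simp: less_imp_le)
    hence "c1 * (\<rho> istar - \<rho> k) \<ge> 0" using c1(1) by simp
    moreover have "c2 * (\<rho> j - \<rho> k) \<le> 0" using c2(1) jk by (simp add: mult_nonneg_nonpos)
    moreover have "c1 * (\<rho> istar - \<rho> k) > 0 \<or> c2 * (\<rho> j - \<rho> k) < 0"
    proof (cases "k = istar")
      case True
      thus ?thesis using rho js c2(1) by (simp add: mult_pos_neg)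
    next
      case False
      thus ?thesis using rho c1(1) by simp
    qed
    ultimately show "A j k < A istar k" using c1(2) c2(2) by linarith
  qed
  have ess: "is_ESS A istar"
    unfolding is_ESS_def using dom rho by (auto simp: less_imp_le)
  show ?thesis
    unfolding A_def[symmetric]
    using ess dynamics[OF rho dom] by blast
qed

end
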